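(* Fix a variable $x$ and let $\chi$ be any formula generated by $\chi ::= p_x \mid \mathsf{K}_x\alpha \mid \neg\chi \mid (\chi\wedge\chi)$, where $p\in\mathbf{P}$ and $\alpha$ ranges over sentences. Then for every sentence $\beta$, $\mathsf{K}_\chi\beta\to\mathsf{K}_\chi\mathsf{K}_\chi\beta$ is a theorem of $\mathbf{LEL}$.
   Context: Fix a nonempty finite set $\mathbf{A}$ of agents, a countable set $\mathbf{X}$ of variables disjoint from $\mathbf{A}$, and a countable set $\mathbf{P}$ of predicate letters. Formulas and free variables: $\phi ::= p_x \mid \top \mid \neg\phi \mid (\phi\wedge\phi) \mid [x:=a]\phi \mid \mathsf{K}_X\alpha$ ($p\in\mathbf{P}$, $x\in\mathbf{X}$, $a\in\mathbf{A}$, $X\subseteq\mathbf{X}$ finite possibly empty, $\alpha$ with no free variables), $FV(p_x)=\{x\}$, $FV(\top)=\emptyset$, $FV(\neg\phi)=FV(\phi)$, $FV(\phi\wedge\psi)=FV(\phi)\cup FV(\psi)$, $FV([x:=a]\phi)=FV(\phi)\setminus\{x\}$, $FV(\mathsf{K}_X\alpha)=X$. Sentences have no free variables. $\bot:=\neg\top$, $\langle x:=a\rangle\phi:=\neg[x:=a]\neg\phi$. $\phi[y/x]$ replaces free occurrences of $x$ by $y$ (including in index sets of $\mathsf{K}_X$); admissible if $x$ has no free occurrence within the scope of any $[y:=b]$. $[\vec{x}:=\vec{a}]\phi$ abbreviates $[x_1:=a_1]\cdots[x_n:=a_n]\phi$ for equal-length strings $\vec x,\vec a$, $\mathsf{K}_{\vec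 x}:=\mathsf{K}_{\{x_1,\dots,x_n\}}$, $\mathsf{K}_x:=\mathsf{K}_{\{x\}}$, $\{\vec a\}=\{a_1,\dots,a_n\}$. $\mathbf{LEL}$: axioms — propositional tautologies; $\mathsf{K}_X(\alpha\to\beta)\to(\mathsf{K}_X\alpha\to\mathsf{K}_X\beta)$; $\mathsf{K}_X\alpha\to\mathsf{K}_Y\alpha$ ($X\subseteq Y$); $[x:=a](\phi\to\psi)\to([x:=a]\phi\to[x:=a]\psi)$; $\langle x:=a\rangle\phi\to[x:=a]\phi$; $\phi\to[x:=a]\phi$ ($x\notin FV(\phi)$); $[y:=a]([x:=a]\phi\to\phi[y/x])$ ($\phi[y/x]$ admissible); $[x:=a][y:=b]\phi\to[y:=b][x:=a]\phi$ ($x\neq y$); $\bigwedge_{a\in\mathbf{A}}[x:=a]\phi\to\phi$; $\mathsf{K}_X\alpha\to\alpha$; $[\vec{x}:=\vec{a}](\neg\mathsf{K}_{\vec{x}}\alpha\to\mathsf{K}_{\vec{x}}[\vec{x}:=\vec{a}]\neg\mathsf{K}_{\vec{x}}\alpha)$; $[x:=a]\mathsf{K}_{x}\langle x:=a\rangle\top$; $[x:=a](p_x\to\mathsf{K}_{x}[x:=a]p_x)$; $[\vec{x}:=\vec{a}](\bigwedge_{b\in B}[x:=b]\bot\to\mathsf{K}_{\vec{x}}\bigwedge_{b\in B}[x:=b]\bot)$ with $B=\mathbf{A}\setminus\{\vec a\}$. Rules: modus ponens; from sentence $\alpha$ infer $\mathsf{K}_\emptyset\alpha$; from $\phi$ infer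 $[x:=a]\phi$. Intensional distributed knowledge: for a formula $\phi$ with free variables among $\{x\}$ and $A\subseteq\mathbf{A}$, let $\phi!(A):=\bigwedge_{a\in A}\langle x:=a\rangle\phi\wedge\bigwedge_{b\in\mathbf{A}\setminus A}[x:=b]\neg\phi$. For a sentence $\alpha$, $\mathsf{K}_\phi\alpha:=\bigwedge_{\{\vec a\}\subseteq\mathbf{A}}(\phi!(\{\vec a\})\to[\vec{x}:=\vec{a}]\mathsf{K}_{\vec{x}}\alpha)$, where the conjunction ranges over all subsets of $\mathbf{A}$, each listed as a string $\vec a$ of distinct agents and paired with a string $\vec x$ of distinct variables of the same length. *)

theory Defs
  imports Main "HOL-Library.Countable"
begin

text \<open>'p: predicate letters, 'v: variables, 'a: agents.
  P p x is p_x; Asg x a phi is [x:=a]phi; K X alpha is K_X alpha.\<close>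

datatype ('p, 'v, 'a) fm =
    P 'p 'v
  | Top
  | Neg "('p, 'v, 'a) fm"
  | And "('p, 'v, 'a) fm" "('p, 'v, 'a) fm"
  | Asg 'v 'a "('p, 'v, 'a) fm"
  | K "'v set" "('p, 'v, 'a) fm"

fun FV :: "('p, 'v, 'a) fm \<Rightarrow> 'v set" where
  "FV (P p x) = {x}"
| "FV Top = {}"
| "FV (Neg \<phi>) = FV \<phi>"
| "FV (And \<phi> \<psi>) = FV \<phi> \<union> FV \<psi>"
| "FV (Asg x a \<phi>) = FV \<phi> - {x}"
| "FV (K X \<alpha>) = X"

fun wff :: "('p, 'v, 'a) fm \<Rightarrow> bool" where
  "wff (P p x) = True"
| "wff Top = True"
| "wff (Neg \<phi>) = wff \<phi>"
| "wff (And \<phi> \<psi>) = (wff \<phi> \<and> wff \<psi>)"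
| "wff (Asg x a \<phi>) = wff \<phi>"
| "wff (K X \<alpha>) = (finite X \<and> wff \<alpha> \<and> FV \<alpha> = {})"

definition sentence :: "('p, 'v, 'a) fm \<Rightarrow> bool" where
  "sentence \<phi> \<longleftrightarrow> wff \<phi> \<and> FV \<phi> = {}"

definition Bot :: "('p, 'v, 'a) fm" where "Bot = Neg Top"
definition Imp :: "('p, 'v, 'a) fm \<Rightarrow> ('p, 'v, 'a) fm \<Rightarrow> ('p, 'v, 'a) fm" where
  "Imp \<phi> \<psi> = Neg (And \<phi> (Neg \<psi>))"
definition Dia :: "'v \<Rightarrow> 'a \<Rightarrow> ('p, 'v, 'a) fm \<Rightarrow> ('p, 'v, 'a) fm" where
  "Dia x a \<phi> = Neg (Asg x a (Neg \<phi>))"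

fun Conj :: "('p, 'v, 'a) fm list \<Rightarrow> ('p, 'v, 'a) fm" where
  "Conj [] = Top"
| "Conj (\<phi> # \<phi>s) = And \<phi> (Conj \<phi>s)"

definition ConjSet :: "('i \<Rightarrow> ('p, 'v, 'a) fm) \<Rightarrow> 'i set \<Rightarrow> ('p, 'v, 'a) fm" where
  "ConjSet f S = Conj (map f (SOME xs. set xs = S \<and> distinct xs))"

definition Asgs :: "('v \<times> 'a) list \<Rightarrow> ('p, 'v, 'a) fm \<Rightarrow> ('p, 'v, 'a) fm" where
  "Asgs zs \<phi> = foldr (\<lambda>(x, a) \<psi>. Asg x a \<psi>) zs \<phi>"

definition Kvec :: "('v \<times> 'a) list \<Rightarrow> ('p, 'v, 'a) fm \<Rightarrow> ('p, 'v, 'a) fm" where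
  "Kvec zs \<alpha> = K (set (map fst zs)) \<alpha>"

fun subst :: "'v \<Rightarrow> 'v \<Rightarrow> ('p, 'v, 'a) fm \<Rightarrow> ('p, 'v, 'a) fm" where
  "subst y x (P p z) = P p (if z = x then y else z)"
| "subst y x Top = Top"
| "subst y x (Neg \<phi>) = Neg (subst y x \<phi>)"
| "subst y x (And \<phi> \<psi>) = And (subst y x \<phi>) (subst y x \<psi>)"
| "subst y x (Asg z a \<phi>) = (if z = x then Asg z a \<phi> else Asg z a (subst y x \<phi>))"
| "subst y x (K X \<alpha>) = K (if x \<in> X then insert y (X - {x}) else X) \<alpha>"

fun admissible :: "'v \<Rightarrow> 'v \<Rightarrow> ('p, 'v, 'a) fm \<Rightarrow> bool" where
  "admissible y x (P p z) = True"
| "admissible y x Top = True"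
| "admissible y x (Neg \<phi>) = admissible y x \<phi>"
| "admissible y x (And \<phi> \<psi>) = (admissible y x \<phi> \<and> admissible y x \<psi>)"
| "admissible y x (Asg z a \<phi>) =
     (if z = x then True else if z = y then x \<notin> FV \<phi> else admissible y x \<phi>)"
| "admissible y x (K X \<alpha>) = True"

text \<open>Propositional tautologies: valid under every assignment of truth values
  to the propositionally atomic subformulas (p_x, [x:=a]phi, K_X alpha).\<close>
fun peval :: "(('p, 'v, 'a) fm \<Rightarrow> bool) \<Rightarrow> ('p, 'v, 'a) fm \<Rightarrow> bool" where
  "peval v (P p x) = v (P p x)"
| "peval v Top = True"
| "peval v (Neg \<phi>) = (\<not> peval v \<phi>)"
| "peval v (And \<phi> \<psi>) = (peval v \<phi> \<and> peval v \<psi>)"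
| "peval v (Asg x a \<phi>) = v (Asg x a \<phi>)"
| "peval v (K X \<alpha>) = v (K X \<alpha>)"

definition taut :: "('p, 'v, 'a) fm \<Rightarrow> bool" where
  "taut \<phi> \<longleftrightarrow> (\<forall>v. peval v \<phi>)"

inductive derivable :: "('p, 'v, 'a) fm \<Rightarrow> bool" where
  ax_taut: "wff \<phi> \<Longrightarrow> taut \<phi> \<Longrightarrow> derivable \<phi>"
| ax_KK: "wff (Imp (K X (Imp \<alpha> \<beta>)) (Imp (K X \<alpha>) (K X \<beta>))) \<Longrightarrow>
    derivable (Imp (K X (Imp \<alpha> \<beta>)) (Imp (K X \<alpha>) (K X \<beta>)))"
| ax_mono: "X \<subseteq> Y \<Longrightarrow> wff (Imp (K X \<alpha>) (K Y \<alpha>)) \<Longrightarrow>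
    derivable (Imp (K X \<alpha>) (K Y \<alpha>))"
| ax_KA: "wff (Imp (Asg x a (Imp \<phi> \<psi>)) (Imp (Asg x a \<phi>) (Asg x a \<psi>))) \<Longrightarrow>
    derivable (Imp (Asg x a (Imp \<phi> \<psi>)) (Imp (Asg x a \<phi>) (Asg x a \<psi>)))"
| ax_func: "wff (Imp (Dia x a \<phi>) (Asg x a \<phi>)) \<Longrightarrow>
    derivable (Imp (Dia x a \<phi>) (Asg x a \<phi>))"
| ax_vac: "x \<notin> FV \<phi> \<Longrightarrow> wff (Imp \<phi> (Asg x a \<phi>)) \<Longrightarrow>
    derivable (Imp \<phi> (Asg x a \<phi>))"
| ax_sub: "admissible y x \<phi> \<Longrightarrow> wff (Asg y a (Imp (Asg x a \<phi>) (subst y x \<phi>))) \<Longrightarrow>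
    derivable (Asg y a (Imp (Asg x a \<phi>) (subst y x \<phi>)))"
| ax_comm: "x \<noteq> y \<Longrightarrow> wff (Imp (Asg x a (Asg y b \<phi>)) (Asg y b (Asg x a \<phi>))) \<Longrightarrow>
    derivable (Imp (Asg x a (Asg y b \<phi>)) (Asg y b (Asg x a \<phi>)))"
| ax_all: "set as = UNIV \<Longrightarrow> wff (Imp (Conj (map (\<lambda>a. Asg x a \<phi>) as)) \<phi>) \<Longrightarrow>
    derivable (Imp (Conj (map (\<lambda>a. Asg x a \<phi>) as)) \<phi>)"
| ax_T: "wff (Imp (K X \<alpha>) \<alpha>) \<Longrightarrow> derivable (Imp (K X \<alpha>) \<alpha>)"
| ax_neg_intro: "wff (Asgs zs (Imp (Neg (Kvec zs \<alpha>)) (Kvec zs (Asgs zs (Neg (Kvec zs \<alpha>)))))) \<Longrightarrow>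
    derivable (Asgs zs (Imp (Neg (Kvec zs \<alpha>)) (Kvec zs (Asgs zs (Neg (Kvec zs \<alpha>))))))"
| ax_exist: "wff (Asg x a (K {x} (Dia x a (Top :: ('p, 'v, 'a) fm)))) \<Longrightarrow>
    derivable (Asg x a (K {x} (Dia x a (Top :: ('p, 'v, 'a) fm))))"
| ax_pred: "wff (Asg x a (Imp (P p x) (K {x} (Asg x a (P p x))))) \<Longrightarrow>
    derivable (Asg x a (Imp (P p x) (K {x} (Asg x a (P p x)))))"
| ax_bot: "set bs = UNIV - set (map snd zs) \<Longrightarrow>
    wff (Asgs zs (Imp (Conj (map (\<lambda>b. Asg x b (Bot :: ('p, 'v, 'a) fm)) bs)) (Kvec zs (Conj (map (\<lambda>b. Asg x b (Bot :: ('p, 'v, 'a) fm)) bs))))) \<Longrightarrow>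
    derivable (Asgs zs (Imp (Conj (map (\<lambda>b. Asg x b (Bot :: ('p, 'v, 'a) fm)) bs)) (Kvec zs (Conj (map (\<lambda>b. Asg x b (Bot :: ('p, 'v, 'a) fm)) bs)))))"
| mp: "derivable (Imp \<phi> \<psi>) \<Longrightarrow> derivable \<phi> \<Longrightarrow> derivable \<psi>"
| nec_K: "sentence \<alpha> \<Longrightarrow> derivable \<alpha> \<Longrightarrow> derivable (K {} \<alpha>)"
| nec_A: "derivable \<phi> \<Longrightarrow> derivable (Asg x a \<phi>)"

text \<open>phi!(A), for phi with free variables among {x}.\<close>
definition Bang :: "'v \<Rightarrow> ('p, 'v, 'a::finite) fm \<Rightarrow> 'a set \<Rightarrow> ('p, 'v, 'a) fm" where
  "Bang x \<phi> A = And (ConjSet (\<lambda>a. Dia x a \<phi>) A) (ConjSet (\<lambda>b. Asg x b (Neg \<phi>)) (UNIV - A))"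

definition valid_choice :: "('a::finite set \<Rightarrow> ('v \<times> 'a) list) \<Rightarrow> bool" where
  "valid_choice ch \<longleftrightarrow> (\<forall>A. distinct (map snd (ch A)) \<and> set (map snd (ch A)) = A
                              \<and> distinct (map fst (ch A)))"

definition Kphi :: "('a::finite set \<Rightarrow> ('v \<times> 'a) list) \<Rightarrow> 'v \<Rightarrow> ('p, 'v, 'a) fm
    \<Rightarrow> ('p, 'v, 'a) fm \<Rightarrow> ('p, 'v, 'a) fm" where
  "Kphi ch x \<phi> \<alpha> = ConjSet (\<lambda>A. Imp (Bang x \<phi> A) (Asgs (ch A) (Kvec (ch A) \<alpha>))) (Pow UNIV)"

inductive chi_form :: "'v \<Rightarrow> ('p, 'v, 'a) fm \<Rightarrow> bool" for x where
  "chi_form x (P p x)"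
| "sentence \<alpha> \<Longrightarrow> chi_form x (K {x} \<alpha>)"
| "chi_form x \<chi> \<Longrightarrow> chi_form x (Neg \<chi>)"
| "chi_form x \<chi> \<Longrightarrow> chi_form x \<psi> \<Longrightarrow> chi_form x (And \<chi> \<psi>)"

end

theory Submission
  imports Defs
begin


lemma derivable_wff: "derivable \<phi> \<Longrightarrow> wff \<phi>"
  by (induction rule: derivable.induct) (auto simp: Imp_def sentence_def)

fun Imps :: "('p,'v,'a) fm list \<Rightarrow> ('p,'v,'a) fm \<Rightarrow> ('p,'v,'a) fm" where
  "Imps [] \<psi> = \<psi>"
| "Imps (\<gamma>#\<Gamma>) \<psi> = Imp \<gamma> (Imps \<Gamma> \<psi>)"

lemma wff_Imp[simp]: "wff (Imp a b) = (wff a \<and> wff b)" by (simp add: Imp_def)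
lemma FV_Imp[simp]: "FV (Imp a b) = FV a \<union> FV b" by (simp add: Imp_def)
lemma peval_Imp[simp]: "peval v (Imp a b) = (peval v a \<longrightarrow> peval v b)" by (simp add: Imp_def)
lemma wff_Dia[simp]: "wff (Dia x a b) = wff b" by (simp add: Dia_def)
lemma FV_Dia[simp]: "FV (Dia x a b) = FV b - {x}" by (simp add: Dia_def)

lemma peval_Imps[simp]: "peval v (Imps \<Gamma> \<psi>) = ((\<forall>\<gamma>\<in>set \<Gamma>. peval v \<gamma>) \<longrightarrow> peval v \<psi>)"
  by (induction \<Gamma>) auto
lemma wff_Imps[simp]: "wff (Imps \<Gamma> \<psi>) = ((\<forall>\<gamma>\<in>set \<Gamma>. wff \<gamma>) \<and> wff \<psi>)"
  by (induction \<Gamma>) auto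
lemma FV_Imps[simp]: "FV (Imps \<Gamma> \<psi>) = (\<Union>\<gamma>\<in>set \<Gamma>. FV \<gamma>) \<union> FV \<psi>"
  by (induction \<Gamma>) auto

lemma peval_Conj[simp]: "peval v (Conj l) = (\<forall>\<gamma>\<in>set l. peval v \<gamma>)"
  by (induction l) auto
lemma wff_Conj[simp]: "wff (Conj l) = (\<forall>\<gamma>\<in>set l. wff \<gamma>)"
  by (induction l) auto
lemma FV_Conj[simp]: "FV (Conj l) = (\<Union>\<gamma>\<in>set l. FV \<gamma>)"
  by (induction l) auto

lemma set_SOME_list: "finite S \<Longrightarrow> set (SOME xs. set xs = S \<and> distinct xs) = S"
  by (metis (mono_tags, lifting) finite_distinct_list someI_ex)

lemma peval_ConjSet[simp]: "finite S \<Longrightarrow> peval v (ConjSet f S) = (\<forall>i\<in>S. peval v (f i))"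
  by (simp add: ConjSet_def set_SOME_list)
lemma wff_ConjSet[simp]: "finite S \<Longrightarrow> wff (ConjSet f S) = (\<forall>i\<in>S. wff (f i))"
  by (simp add: ConjSet_def set_SOME_list)
lemma FV_ConjSet[simp]: "finite S \<Longrightarrow> FV (ConjSet f S) = (\<Union>i\<in>S. FV (f i))"
  by (simp add: ConjSet_def set_SOME_list)

lemma Asgs_Nil[simp]: "Asgs [] \<phi> = \<phi>" by (simp add: Asgs_def)
lemma Asgs_Cons[simp]: "Asgs (p#S) \<phi> = Asg (fst p) (snd p) (Asgs S \<phi>)"
  by (cases p) (simp add: Asgs_def)
lemma Asgs_append[simp]: "Asgs (S@R) \<phi> = Asgs S (Asgs R \<phi>)"
  by (induction S) auto
lemma wff_Asgs[simp]: "wff (Asgs S \<phi>) = wff \<phi>" by (induction S) auto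
lemma FV_Asgs[simp]: "FV (Asgs S \<phi>) = FV \<phi> - fst ` set S" by (induction S) auto
lemma Kvec_eq[simp]: "Kvec zs \<alpha> = K (fst ` set zs) \<alpha>" by (simp add: Kvec_def)

lemma taut_rule:
  assumes "\<forall>\<gamma>\<in>set \<Gamma>. derivable \<gamma>" "\<forall>v. (\<forall>\<gamma>\<in>set \<Gamma>. peval v \<gamma>) \<longrightarrow> peval v \<psi>" "wff \<psi>"
  shows "derivable \<psi>"
  using assms
proof (induction \<Gamma> arbitrary: \<psi>)
  case Nil then show ?case by (auto intro: ax_taut simp: taut_def)
next
  case (Cons \<gamma> \<Gamma>)
  have "derivable (Imp \<gamma> \<psi>)"
    using Cons by (auto intro!: Cons.IH dest: derivable_wff)
  then show ?case using Cons.prems mp by auto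
qed

lemma imp_refl: "wff a \<Longrightarrow> derivable (Imp a a)"
  by (rule taut_rule[of "[]"]) auto

lemma imp_trans: "derivable (Imp a b) \<Longrightarrow> derivable (Imp b c) \<Longrightarrow> derivable (Imp a c)"
  by (rule taut_rule[of "[Imp a b, Imp b c]"]) (auto dest: derivable_wff)

lemma mp2: "derivable (Imps \<Gamma> \<psi>) \<Longrightarrow> \<forall>\<gamma>\<in>set \<Gamma>. derivable \<gamma> \<Longrightarrow> derivable \<psi>"
  by (rule taut_rule[of "Imps \<Gamma> \<psi> # \<Gamma>"]) (auto dest: derivable_wff)

lemma asg_dist: "wff (Imps \<Gamma> \<psi>) \<Longrightarrow>
   derivable (Imp (Asg x a (Imps \<Gamma> \<psi>)) (Imps (map (Asg x a) \<Gamma>) (Asg x a \<psi>)))"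
proof (induction \<Gamma>)
  case Nil then show ?case by (auto intro: imp_refl)
next
  case (Cons \<gamma> \<Gamma>)
  have 1: "derivable (Imp (Asg x a (Imp \<gamma> (Imps \<Gamma> \<psi>))) (Imp (Asg x a \<gamma>) (Asg x a (Imps \<Gamma> \<psi>))))"
    using Cons.prems by (intro ax_KA) simp
  have 2: "derivable (Imp (Asg x a (Imps \<Gamma> \<psi>)) (Imps (map (Asg x a) \<Gamma>) (Asg x a \<psi>)))"
    using Cons by simp
  show ?case
    apply (rule taut_rule[of "[Imp (Asg x a (Imp \<gamma> (Imps \<Gamma> \<psi>))) (Imp (Asg x a \<gamma>) (Asg x a (Imps \<Gamma> \<psi>))), Imp (Asg x a (Imps \<Gamma> \<psi>)) (Imps (map (Asg x a) \<Gamma>) (Asg x a \<psi>))]"])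
    using 1 2 apply simp
     apply (simp del: peval.simps)
    using 1 2 by (auto dest!: derivable_wff)
qed

lemma asg_monoL: "derivable (Imps \<Gamma> \<psi>) \<Longrightarrow> derivable (Imps (map (Asg x a) \<Gamma>) (Asg x a \<psi>))"
proof -
  assume d: "derivable (Imps \<Gamma> \<psi>)"
  show ?thesis by (rule mp[OF asg_dist[OF derivable_wff[OF d]] nec_A[OF d]])
qed

lemma asgs_monoL: "derivable (Imps \<Gamma> \<psi>) \<Longrightarrow> derivable (Imps (map (Asgs S) \<Gamma>) (Asgs S \<psi>))"
proof (induction S)
  case Nil then show ?case by simp
next
  case (Cons p S)
  from asg_monoL[OF Cons.IH[OF Cons.prems], of "fst p" "snd p"]
  show ?case by (simp add: comp_def)
qed

lemma asgs_nec: "derivable \<phi> \<Longrightarrow> derivable (Asgs S \<phi>)"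
  using asgs_monoL[of "[]"] by simp

lemma asgs_mono: "derivable (Imp \<phi> \<psi>) \<Longrightarrow> derivable (Imp (Asgs S \<phi>) (Asgs S \<psi>))"
  using asgs_monoL[of "[\<phi>]" \<psi> S] by simp

lemma asgs_mono2: "derivable (Imp \<phi>1 (Imp \<phi>2 \<psi>)) \<Longrightarrow> derivable (Imp (Asgs S \<phi>1) (Imp (Asgs S \<phi>2) (Asgs S \<psi>)))"
  using asgs_monoL[of "[\<phi>1,\<phi>2]" \<psi> S] by simp

lemma K_nec: "sentence \<alpha> \<Longrightarrow> finite X \<Longrightarrow> derivable \<alpha> \<Longrightarrow> derivable (K X \<alpha>)"
  by (rule mp[OF ax_mono[of "{}" X \<alpha>]]) (auto simp: sentence_def intro: nec_K)

lemma K_dist: "wff (Imps \<Gamma> \<psi>) \<Longrightarrow> FV (Imps \<Gamma> \<psi>) = {} \<Longrightarrow> finite X \<Longrightarrow>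
   derivable (Imp (K X (Imps \<Gamma> \<psi>)) (Imps (map (K X) \<Gamma>) (K X \<psi>)))"
proof (induction \<Gamma>)
  case Nil then show ?case by (auto intro: imp_refl)
next
  case (Cons \<gamma> \<Gamma>)
  have 1: "derivable (Imp (K X (Imp \<gamma> (Imps \<Gamma> \<psi>))) (Imp (K X \<gamma>) (K X (Imps \<Gamma> \<psi>))))"
    using Cons.prems by (intro ax_KK) simp
  have 2: "derivable (Imp (K X (Imps \<Gamma> \<psi>)) (Imps (map (K X) \<Gamma>) (K X \<psi>)))"
    using Cons by simp
  show ?case
    apply (rule taut_rule[of "[Imp (K X (Imp \<gamma> (Imps \<Gamma> \<psi>))) (Imp (K X \<gamma>) (K X (Imps \<Gamma> \<psi>))), Imp (K X (Imps \<Gamma> \<psi>)) (Imps (map (K X) \<Gamma>) (K X \<psi>))]"])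
    using 1 2 apply simp
     apply (simp del: peval.simps)
    using 1 2 by (auto dest!: derivable_wff)
qed

lemma K_monoL: "derivable (Imps \<Gamma> \<psi>) \<Longrightarrow> FV (Imps \<Gamma> \<psi>) = {} \<Longrightarrow> finite X \<Longrightarrow>
   derivable (Imps (map (K X) \<Gamma>) (K X \<psi>))"
proof -
  assume d: "derivable (Imps \<Gamma> \<psi>)" and f: "FV (Imps \<Gamma> \<psi>) = {}" "finite X"
  show ?thesis by (rule mp[OF K_dist[OF derivable_wff[OF d] f] K_nec[OF _ f(2) d]]) (use d f derivable_wff[OF d] in \<open>simp add: sentence_def\<close>)
qed

lemma K_mono: "derivable (Imp \<phi> \<psi>) \<Longrightarrow> FV \<phi> = {} \<Longrightarrow> FV \<psi> = {} \<Longrightarrow> finite X \<Longrightarrow>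
   derivable (Imp (K X \<phi>) (K X \<psi>))"
  using K_monoL[of "[\<phi>]" \<psi> X] by simp

lemma K_mono2: "derivable (Imp \<phi>1 (Imp \<phi>2 \<psi>)) \<Longrightarrow> FV \<phi>1 = {} \<Longrightarrow> FV \<phi>2 = {} \<Longrightarrow> FV \<psi> = {} \<Longrightarrow> finite X \<Longrightarrow>
   derivable (Imp (K X \<phi>1) (Imp (K X \<phi>2) (K X \<psi>)))"
  using K_monoL[of "[\<phi>1,\<phi>2]" \<psi> X] by simp

lemma asgs_vac: "wff \<phi> \<Longrightarrow> FV \<phi> \<inter> fst ` set S = {} \<Longrightarrow> derivable (Imp \<phi> (Asgs S \<phi>))"
proof (induction S)
  case Nil then show ?case by (simp add: imp_refl)
next
  case (Cons p S)
  have 1: "derivable (Imp \<phi> (Asg (fst p) (snd p) \<phi>))" using Cons.prems by (intro ax_vac) auto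
  have 2: "derivable (Imp (Asg (fst p) (snd p) \<phi>) (Asg (fst p) (snd p) (Asgs S \<phi>)))"
    using asgs_mono[OF Cons.IH, of "[p]"] Cons.prems by auto
  show ?case using imp_trans[OF 1 2] by simp
qed

lemma subst_self[simp]: "subst x x \<phi> = \<phi>"
  by (induction \<phi>) auto
lemma admissible_self[simp]: "admissible x x \<phi>"
  by (induction \<phi>) auto

lemma sub_self: "wff \<phi> \<Longrightarrow> derivable (Asg x a (Imp (Asg x a \<phi>) \<phi>))"
  using ax_sub[of x x \<phi> a] by simp

lemma sub_self2: "wff \<phi> \<Longrightarrow> derivable (Asg x a (Imp \<phi> (Asg x a \<phi>)))"
proof -
  assume w: "wff \<phi>"
  have 1: "derivable (Asg x a (Imp (Asg x a (Neg \<phi>)) (Neg \<phi>)))" using sub_self[of "Neg \<phi>"] w by simp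
  have 2: "derivable (Asg x a (Imp (Dia x a \<phi>) (Asg x a \<phi>)))" using w by (intro nec_A ax_func) simp
  have 3: "derivable (Imps [Imp (Asg x a (Neg \<phi>)) (Neg \<phi>), Imp (Dia x a \<phi>) (Asg x a \<phi>)] (Imp \<phi> (Asg x a \<phi>)))"
    using w by (intro taut_rule[of "[]"]) (auto simp: Dia_def)
  show ?thesis using mp2[OF asg_monoL[OF 3]] 1 2 by auto
qed



lemma taut_imps: "\<forall>v. (\<forall>\<gamma>\<in>set \<Gamma>. peval v \<gamma>) \<longrightarrow> peval v \<psi> \<Longrightarrow> wff (Imps \<Gamma> \<psi>) \<Longrightarrow> derivable (Imps \<Gamma> \<psi>)"
  by (rule taut_rule[of "[]"]) auto

lemma asgs_combine: "derivable (Imps \<Gamma> \<psi>) \<Longrightarrow> \<forall>\<gamma>\<in>set \<Gamma>. derivable (Asgs S \<gamma>) \<Longrightarrow> derivable (Asgs S \<psi>)"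
  by (rule mp2[OF asgs_monoL[of \<Gamma> \<psi> S]]) auto

lemma asg_combine: "derivable (Imps \<Gamma> \<psi>) \<Longrightarrow> \<forall>\<gamma>\<in>set \<Gamma>. derivable (Asg x a \<gamma>) \<Longrightarrow> derivable (Asg x a \<psi>)"
  using asgs_combine[of \<Gamma> \<psi> "[(x,a)]"] by simp

lemma K_combine: "derivable (Imps \<Gamma> \<psi>) \<Longrightarrow> FV (Imps \<Gamma> \<psi>) = {} \<Longrightarrow> finite X \<Longrightarrow>
   \<forall>\<gamma>\<in>set \<Gamma>. derivable (K X \<gamma>) \<Longrightarrow> derivable (K X \<psi>)"
  by (rule mp2[OF K_monoL[of \<Gamma> \<psi> X]]) auto

lemma KA_monoL: "derivable (Imps \<Gamma> \<psi>) \<Longrightarrow> FV (Imps \<Gamma> \<psi>) \<subseteq> fst ` set S \<Longrightarrow> finite X \<Longrightarrow>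
   derivable (Imps (map (\<lambda>\<gamma>. K X (Asgs S \<gamma>)) \<Gamma>) (K X (Asgs S \<psi>)))"
proof -
  assume d: "derivable (Imps \<Gamma> \<psi>)" and f: "FV (Imps \<Gamma> \<psi>) \<subseteq> fst ` set S" "finite X"
  have 1: "derivable (Imps (map (Asgs S) \<Gamma>) (Asgs S \<psi>))" by (rule asgs_monoL[OF d])
  have 2: "FV (Imps (map (Asgs S) \<Gamma>) (Asgs S \<psi>)) = {}" using f(1) by auto
  show ?thesis using K_monoL[OF 1 2 f(2)] by (simp add: comp_def)
qed

lemma AK_monoL: "derivable (Imps \<Gamma> \<psi>) \<Longrightarrow> FV (Imps \<Gamma> \<psi>) = {} \<Longrightarrow> finite X \<Longrightarrow>
   derivable (Imps (map (\<lambda>\<gamma>. Asgs S (K X \<gamma>)) \<Gamma>) (Asgs S (K X \<psi>)))"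
proof -
  assume d: "derivable (Imps \<Gamma> \<psi>)" and f: "FV (Imps \<Gamma> \<psi>) = {}" "finite X"
  have 1: "derivable (Imps (map (K X) \<Gamma>) (K X \<psi>))" by (rule K_monoL[OF d f])
  show ?thesis using asgs_monoL[OF 1, of S] by (simp add: comp_def)
qed

lemma asgs_self: "wff \<phi> \<Longrightarrow> derivable (Asgs S (Imp \<phi> (Asgs S \<phi>))) \<and> derivable (Asgs S (Imp (Asgs S \<phi>) \<phi>))"
proof (induction S)
  case Nil then show ?case by (simp add: imp_refl)
next
  case (Cons p S)
  define x where "x = fst p"
  define a where "a = snd p"
  define \<psi> where "\<psi> = Asgs S \<phi>"
  have w: "wff \<psi>" using Cons.prems by (simp add: \<psi>_def)
  have IH1: "derivable (Asg x a (Asgs S (Imp \<phi> \<psi>)))" using Cons by (simp add: \<psi>_def nec_A)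
  have IH2: "derivable (Asg x a (Asgs S (Imp \<psi> \<phi>)))" using Cons by (simp add: \<psi>_def nec_A)
  have s1: "derivable (Asg x a (Imp \<psi> (Asg x a \<psi>)))" by (rule sub_self2[OF w])
  have s2: "derivable (Asg x a (Imp (Asg x a \<psi>) \<psi>))" by (rule sub_self[OF w])
  have v1: "derivable (Imp (Imp \<psi> (Asg x a \<psi>)) (Asgs S (Imp \<psi> (Asg x a \<psi>))))"
    by (rule asgs_vac) (use w in \<open>auto simp: \<psi>_def\<close>)
  have v2: "derivable (Imp (Imp (Asg x a \<psi>) \<psi>) (Asgs S (Imp (Asg x a \<psi>) \<psi>)))"
    by (rule asgs_vac) (use w in \<open>auto simp: \<psi>_def\<close>)
  have t1: "derivable (Asg x a (Asgs S (Imp \<psi> (Asg x a \<psi>))))"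
    using mp[OF asgs_mono[OF v1, of "[(x,a)]"]] s1 by simp
  have t2: "derivable (Asg x a (Asgs S (Imp (Asg x a \<psi>) \<psi>)))"
    using mp[OF asgs_mono[OF v2, of "[(x,a)]"]] s2 by simp
  have c1: "derivable (Asgs ((x,a)#S) (Imp \<phi> (Asg x a \<psi>)))"
    by (rule asgs_combine[of "[Imp \<phi> \<psi>, Imp \<psi> (Asg x a \<psi>)]"], rule taut_imps)
       (use IH1 t1 w Cons.prems in auto)
  have c2: "derivable (Asgs ((x,a)#S) (Imp (Asg x a \<psi>) \<phi>))"
    by (rule asgs_combine[of "[Imp \<psi> \<phi>, Imp (Asg x a \<psi>) \<psi>]"], rule taut_imps)
       (use IH2 t2 w Cons.prems in auto)
  show ?case using c1 c2 by (simp add: x_def a_def \<psi>_def)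
qed

lemma PI: "sentence \<beta> \<Longrightarrow>
  derivable (Asgs S (Imp (K (fst ` set S) \<beta>) (K (fst ` set S) (Asgs S (K (fst ` set S) \<beta>)))))"
proof -
  assume sb: "sentence \<beta>"
  define V where "V = fst ` set S"
  have fV: "finite V" by (simp add: V_def)
  define k where "k = K V \<beta>"
  define N where "N = Asgs S (Neg k)"
  define D where "D = Asgs S k"
  define M where "M = Asgs S (Neg (K V N))"
  have wk: "wff k" "FV k = V" using sb fV by (auto simp: k_def sentence_def)
  have sN: "wff N" "FV N = {}" "wff D" "FV D = {}" using wk by (auto simp: N_def D_def V_def)
  have sM: "wff M" "FV M = {}" using sN fV by (auto simp: M_def V_def)
  have a: "derivable (Asgs S (Imp (Neg k) (K V N)))"
    using ax_neg_intro[of S \<beta>] sb by (simp add: sentence_def k_def N_def V_def)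
  have b: "derivable (Asgs S (Imp (Neg (K V N)) (K V M)))"
    using ax_neg_intro[of S N] sN by (simp add: M_def V_def)
  have c: "derivable (Asgs S (Imp N (Neg k)))"
    using asgs_self[of "Neg k" S] wk by (simp add: N_def)
  have d: "derivable (Asgs S (Imp (K V N) N))"
    by (rule asgs_nec, rule ax_T) (use sN fV in simp)
  have e0: "derivable (Imps [Imp (Neg k) (K V N), Neg (K V N)] k)"
    by (rule taut_imps) (use sN wk fV in auto)
  have e: "derivable (Imp M D)"
    using mp[OF _ a, of "Imp M D"] asgs_monoL[OF e0, of S] by (simp add: M_def D_def)
  have g: "derivable (Asgs S (Imp (K V M) (K V D)))"
    by (rule asgs_nec, rule K_mono[OF e]) (use sN sM fV in auto)
  have "derivable (Asgs S (Imp k (K V D)))"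
    by (rule asgs_combine[of "[Imp (K V N) N, Imp N (Neg k), Imp (Neg (K V N)) (K V M), Imp (K V M) (K V D)]"],
        rule taut_imps) (use a b c d g sN sM wk fV in auto)
  then show ?thesis by (simp add: k_def D_def V_def)
qed



lemma chi_wff: "chi_form x \<chi> \<Longrightarrow> wff \<chi> \<and> FV \<chi> \<subseteq> {x}"
  by (induction rule: chi_form.induct) (auto simp: sentence_def)

lemma rig: "chi_form x \<chi> \<Longrightarrow>
   derivable (Asg x a (Imp \<chi> (K {x} (Asg x a \<chi>)))) \<and>
   derivable (Asg x a (Imp (Neg \<chi>) (K {x} (Asg x a (Neg \<chi>)))))"
proof (induction rule: chi_form.induct)
  case (1 p)
  define \<alpha> where "\<alpha> = Asg x a (P p x)"
  have pos: "derivable (Asg x a (Imp (P p x) (K {x} \<alpha>)))"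
    unfolding \<alpha>_def by (rule ax_pred) simp
  have n1: "derivable (Asg x a (Imp (Neg (K {x} \<alpha>)) (K {x} (Asg x a (Neg (K {x} \<alpha>))))))"
    using ax_neg_intro[of "[(x,a)]" \<alpha>] by (simp add: \<alpha>_def)
  have n3: "derivable (Asg x a (Imp \<alpha> (P p x)))"
    unfolding \<alpha>_def by (rule sub_self) simp
  have n4: "derivable (Asg x a (Imp (K {x} \<alpha>) \<alpha>))"
    by (rule nec_A, rule ax_T) (simp add: \<alpha>_def)
  have n50: "derivable (Imps [Imp (P p x) (K {x} \<alpha>), Neg (K {x} \<alpha>)] (Neg (P p x)))"
    by (rule taut_imps) (auto simp: \<alpha>_def)
  have n5: "derivable (Imp (Asg x a (Neg (K {x} \<alpha>))) (Asg x a (Neg (P p x))))"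
  proof -
    have "derivable (Imp (Asg x a (Imp (P p x) (K {x} \<alpha>))) (Imp (Asg x a (Neg (K {x} \<alpha>))) (Asg x a (Neg (P p x)))))"
      using asg_monoL[OF n50, of x a] by simp
    then show ?thesis using mp pos by blast
  qed
  have n6: "derivable (Imp (K {x} (Asg x a (Neg (K {x} \<alpha>)))) (K {x} (Asg x a (Neg (P p x)))))"
    by (rule K_mono[OF n5]) (auto simp: \<alpha>_def)
  have neg: "derivable (Asg x a (Imp (Neg (P p x)) (K {x} (Asg x a (Neg (P p x))))))"
    by (rule asg_combine[of "[Imp (K {x} \<alpha>) \<alpha>, Imp \<alpha> (P p x), Imp (Neg (K {x} \<alpha>)) (K {x} (Asg x a (Neg (K {x} \<alpha>)))),
          Imp (K {x} (Asg x a (Neg (K {x} \<alpha>)))) (K {x} (Asg x a (Neg (P p x))))]"], rule taut_imps)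
       (use n1 n3 n4 nec_A[OF n6] in \<open>auto simp: \<alpha>_def\<close>)
  show ?case using pos neg by (simp add: \<alpha>_def)
next
  case (2 \<alpha>)
  have pos: "derivable (Asg x a (Imp (K {x} \<alpha>) (K {x} (Asg x a (K {x} \<alpha>)))))"
    using PI[OF 2, of "[(x,a)]"] by simp
  have neg: "derivable (Asg x a (Imp (Neg (K {x} \<alpha>)) (K {x} (Asg x a (Neg (K {x} \<alpha>))))))"
    using ax_neg_intro[of "[(x,a)]" \<alpha>] 2 by (simp add: sentence_def)
  show ?case using pos neg by simp
next
  case (3 \<chi>)
  have w: "wff \<chi>" "FV \<chi> \<subseteq> {x}" using chi_wff[OF 3(1)] by auto
  have m0: "derivable (Imps [\<chi>] (Neg (Neg \<chi>)))" by (rule taut_imps) (use w in auto)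
  have m: "derivable (Imp (K {x} (Asg x a \<chi>)) (K {x} (Asg x a (Neg (Neg \<chi>)))))"
    using KA_monoL[OF m0, of "[(x,a)]" "{x}"] w by simp
  have neg: "derivable (Asg x a (Imp (Neg (Neg \<chi>)) (K {x} (Asg x a (Neg (Neg \<chi>))))))"
    by (rule asg_combine[of "[Imp \<chi> (K {x} (Asg x a \<chi>)), Imp (K {x} (Asg x a \<chi>)) (K {x} (Asg x a (Neg (Neg \<chi>))))]"],
        rule taut_imps) (use 3 nec_A[OF m] w in auto)
  show ?case using 3 neg by simp
next
  case (4 \<chi> \<psi>)
  have w: "wff \<chi>" "FV \<chi> \<subseteq> {x}" using chi_wff[OF 4(1)] by auto
  have w2: "wff \<psi>" "FV \<psi> \<subseteq> {x}" using chi_wff[OF 4(2)] by auto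
  have m0: "derivable (Imps [\<chi>, \<psi>] (And \<chi> \<psi>))" by (rule taut_imps) (use w w2 in auto)
  have m: "derivable (Imps [K {x} (Asg x a \<chi>), K {x} (Asg x a \<psi>)] (K {x} (Asg x a (And \<chi> \<psi>))))"
    using KA_monoL[OF m0, of "[(x,a)]" "{x}"] w w2 by simp
  have pos: "derivable (Asg x a (Imp (And \<chi> \<psi>) (K {x} (Asg x a (And \<chi> \<psi>)))))"
    by (rule asg_combine[of "[Imp \<chi> (K {x} (Asg x a \<chi>)), Imp \<psi> (K {x} (Asg x a \<psi>)),
       Imps [K {x} (Asg x a \<chi>), K {x} (Asg x a \<psi>)] (K {x} (Asg x a (And \<chi> \<psi>)))]"],
        rule taut_imps) (use 4 nec_A[OF m] w w2 in auto)
  have k0: "derivable (Imps [Neg \<chi>] (Neg (And \<chi> \<psi>)))" by (rule taut_imps) (use w w2 in auto)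
  have k: "derivable (Imp (K {x} (Asg x a (Neg \<chi>))) (K {x} (Asg x a (Neg (And \<chi> \<psi>)))))"
    using KA_monoL[OF k0, of "[(x,a)]" "{x}"] w w2 by simp
  have l0: "derivable (Imps [Neg \<psi>] (Neg (And \<chi> \<psi>)))" by (rule taut_imps) (use w w2 in auto)
  have l: "derivable (Imp (K {x} (Asg x a (Neg \<psi>))) (K {x} (Asg x a (Neg (And \<chi> \<psi>)))))"
    using KA_monoL[OF l0, of "[(x,a)]" "{x}"] w w2 by simp
  have neg: "derivable (Asg x a (Imp (Neg (And \<chi> \<psi>)) (K {x} (Asg x a (Neg (And \<chi> \<psi>))))))"
    by (rule asg_combine[of "[Imp (Neg \<chi>) (K {x} (Asg x a (Neg \<chi>))), Imp (Neg \<psi>) (K {x} (Asg x a (Neg \<psi>))),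
       Imp (K {x} (Asg x a (Neg \<chi>))) (K {x} (Asg x a (Neg (And \<chi> \<psi>)))),
       Imp (K {x} (Asg x a (Neg \<psi>))) (K {x} (Asg x a (Neg (And \<chi> \<psi>))))]"],
        rule taut_imps) (use 4 nec_A[OF k] nec_A[OF l] w w2 in auto)
  show ?case using pos neg by simp
qed

lemma rig_dia: fixes \<chi> :: "('p,'v,'a) fm" assumes c: "chi_form x \<chi>"
  shows "derivable (Imp (Dia x a \<chi>) (Asg y a (K {y} (Dia x a \<chi>))))"
proof -
  have w: "wff \<chi>" "FV \<chi> \<subseteq> {x}" using chi_wff[OF c] by auto
  define \<theta> where "\<theta> = Dia x a \<chi>"
  have st: "wff \<theta>" "FV \<theta> = {}" using w by (auto simp: \<theta>_def)
  have r1: "derivable (Imp \<theta> (Asg x a \<chi>))" unfolding \<theta>_def by (rule ax_func) (use w in simp)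
  have r20: "derivable (Imps [Imp \<chi> (K {x} (Asg x a \<chi>)), \<chi>] (K {x} (Asg x a \<chi>)))"
    by (rule taut_imps) (use w in auto)
  have r2: "derivable (Imp (Asg x a \<chi>) (Asg x a (K {x} (Asg x a \<chi>))))"
  proof -
    have "derivable (Imp (Asg x a (Imp \<chi> (K {x} (Asg x a \<chi>)))) (Imp (Asg x a \<chi>) (Asg x a (K {x} (Asg x a \<chi>)))))"
      using asg_monoL[OF r20, of x a] by simp
    then show ?thesis using mp conjunct1[OF rig[OF c]] by blast
  qed
  have r3: "derivable (Asg x a (K {x} (Dia x a (Top :: ('p,'v,'a) fm))))" by (rule ax_exist) simp
  have r40: "derivable (Imps [Asg x a \<chi>, Asg x a (Neg \<chi>)] (Asg x a (Neg Top)))"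
    using asg_monoL[of "[\<chi>, Neg \<chi>]" "Neg Top" x a] taut_imps[of "[\<chi>, Neg \<chi>]" "Neg Top"] w by auto
  have r41: "derivable (Imps [Asg x a \<chi>, Dia x a Top] \<theta>)"
    by (rule taut_rule[of "[Imps [Asg x a \<chi>, Asg x a (Neg \<chi>)] (Asg x a (Neg Top))]"])
       (use r40 w in \<open>auto simp: \<theta>_def Dia_def\<close>)
  have r4: "derivable (Imps [K {x} (Asg x a \<chi>), K {x} (Dia x a Top)] (K {x} \<theta>))"
    using K_monoL[OF r41] w st by auto
  have r5: "derivable (Imp (Asg x a (K {x} (Asg x a \<chi>))) (Asg x a (K {x} \<theta>)))"
    by (rule taut_rule[of "[Imps [Asg x a (K {x} (Asg x a \<chi>)), Asg x a (K {x} (Dia x a Top))] (Asg x a (K {x} \<theta>)), Asg x a (K {x} (Dia x a Top))]"])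
      (use asg_monoL[OF r4, of x a] r3 w st in auto)
  have r6: "derivable (Imp \<theta> (Asg x a (K {x} \<theta>)))"
    using imp_trans[OF imp_trans[OF r1 r2] r5] .
  have s: "derivable (Asg y a (Imp (Asg x a (K {x} \<theta>)) (K {y} \<theta>)))"
    using ax_sub[of y x "K {x} \<theta>" a] st by simp
  have v: "derivable (Imp (Asg x a (K {x} \<theta>)) (Asg y a (Asg x a (K {x} \<theta>))))"
    by (rule ax_vac) (use st in auto)
  have r7: "derivable (Imp (Asg x a (K {x} \<theta>)) (Asg y a (K {y} \<theta>)))"
  proof -
    have t: "derivable (Imps [Imp (Asg x a (K {x} \<theta>)) (K {y} \<theta>), Asg x a (K {x} \<theta>)] (K {y} \<theta>))"
      by (rule taut_imps) (use st in auto)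
    have "derivable (Imp (Asg y a (Asg x a (K {x} \<theta>))) (Asg y a (K {y} \<theta>)))"
      by (rule taut_rule[of "[Imps [Asg y a (Imp (Asg x a (K {x} \<theta>)) (K {y} \<theta>)), Asg y a (Asg x a (K {x} \<theta>))] (Asg y a (K {y} \<theta>)), Asg y a (Imp (Asg x a (K {x} \<theta>)) (K {y} \<theta>))]"])
        (use asg_monoL[OF t, of y a] s st in auto)
    then show ?thesis using imp_trans[OF v] by blast
  qed
  show ?thesis using imp_trans[OF r6 r7] by (simp add: \<theta>_def)
qed



lemma asgs_K: "derivable (Asgs S (Imp A B)) \<Longrightarrow> derivable (Imp (Asgs S A) (Asgs S B))"
proof -
  assume d: "derivable (Asgs S (Imp A B))"
  have w: "wff A" "wff B" using derivable_wff[OF d] by auto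
  have t: "derivable (Imps [Imp A B, A] B)" by (rule taut_imps) (use w in auto)
  show ?thesis
    by (rule taut_rule[of "[Imps [Asgs S (Imp A B), Asgs S A] (Asgs S B), Asgs S (Imp A B)]"])
      (use asgs_monoL[OF t, of S] d w in auto)
qed

lemma asg_K: "derivable (Asg x a (Imp A B)) \<Longrightarrow> derivable (Imp (Asg x a A) (Asg x a B))"
  using asgs_K[of "[(x,a)]"] by simp

lemma asg_mono: "derivable (Imp A B) \<Longrightarrow> derivable (Imp (Asg x a A) (Asg x a B))"
  using asgs_mono[of A B "[(x,a)]"] by simp

lemma L_at: "distinct (map fst S) \<Longrightarrow> (y,a) \<in> set S \<Longrightarrow> FV \<phi> \<subseteq> {y} \<Longrightarrow>
  derivable (Asg y a \<phi>) \<Longrightarrow> derivable (Asgs S \<phi>)"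
proof (induction S)
  case Nil then show ?case by simp
next
  case (Cons p S)
  show ?case
  proof (cases "p = (y,a)")
    case True
    have w: "wff \<phi>" using derivable_wff[OF Cons.prems(4)] by simp
    have "y \<notin> fst ` set S" using Cons.prems(1) True by auto
    then have "derivable (Imp \<phi> (Asgs S \<phi>))" using Cons.prems(3) w by (intro asgs_vac) auto
    then have "derivable (Imp (Asg y a \<phi>) (Asg y a (Asgs S \<phi>)))" by (rule asg_mono)
    then show ?thesis using mp Cons.prems(4) True by auto
  next
    case False
    then have "derivable (Asgs S \<phi>)" using Cons by auto
    then show ?thesis by (simp add: nec_A)
  qed
qed

lemma know_at:
  assumes c: "chi_form x \<chi>" and ds: "distinct (map fst S)" and ya: "(y,a) \<in> set S"
  shows "derivable (Imp (Dia x a \<chi>) (Asgs S (K (fst ` set S) (Dia x a \<chi>))))"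
proof -
  have w: "wff \<chi>" "FV \<chi> \<subseteq> {x}" using chi_wff[OF c] by auto
  define \<theta> where "\<theta> = Dia x a \<chi>"
  have st: "wff \<theta>" "FV \<theta> = {}" using w by (auto simp: \<theta>_def)
  define \<sigma> where "\<sigma> = Asg y a (K {y} \<theta>)"
  have ss: "wff \<sigma>" "FV \<sigma> = {}" using st by (auto simp: \<sigma>_def)
  have r1: "derivable (Imp \<theta> \<sigma>)" unfolding \<theta>_def \<sigma>_def by (rule rig_dia[OF c])
  have r2: "derivable (Imp \<sigma> (Asgs S \<sigma>))" by (rule asgs_vac) (use ss in auto)
  have r3: "derivable (Asgs S (Imp \<sigma> (K {y} \<theta>)))"
    by (rule L_at[OF ds ya]) (use st sub_self[of "K {y} \<theta>" y a] in \<open>auto simp: \<sigma>_def\<close>)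
  have r4: "derivable (Asgs S (Imp (K {y} \<theta>) (K (fst ` set S) \<theta>)))"
    by (rule asgs_nec, rule ax_mono) (use ya st in force)+
  have r5: "derivable (Asgs S (Imp \<sigma> (K (fst ` set S) \<theta>)))"
    by (rule asgs_combine[of "[Imp \<sigma> (K {y} \<theta>), Imp (K {y} \<theta>) (K (fst ` set S) \<theta>)]"], rule taut_imps)
      (use r3 r4 st ss in auto)
  show ?thesis using imp_trans[OF imp_trans[OF r1 r2] asgs_K[OF r5]] by (simp add: \<theta>_def)
qed

definition Ew :: "'v set \<Rightarrow> ('v \<times> 'a) list \<Rightarrow> ('p,'v,'a) fm \<Rightarrow> ('p,'v,'a) fm" where
  "Ew W S \<beta> = Asgs S (K (W \<union> fst ` set S) \<beta>)"

lemma Ew_Cons: "Ew W ((w,a)#X) \<beta> = Asg w a (Ew (insert w W) X \<beta>)"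
  by (simp add: Ew_def Un_insert_left Un_insert_right)

lemma wff_Ew[simp]: "finite W \<Longrightarrow> sentence \<beta> \<Longrightarrow> wff (Ew W S \<beta>)"
  by (simp add: Ew_def sentence_def)

lemma move: "fst p \<notin> fst ` set S1 \<Longrightarrow> wff \<theta> \<Longrightarrow>
  derivable (Imp (Asgs (S1 @ p # S2) \<theta>) (Asgs (p # S1 @ S2) \<theta>))"
proof (induction S1)
  case Nil then show ?case by (simp add: imp_refl del: Asgs_Cons)
next
  case (Cons q S1)
  have 1: "derivable (Imp (Asg (fst q) (snd q) (Asgs (S1 @ p # S2) \<theta>))
                           (Asg (fst q) (snd q) (Asg (fst p) (snd p) (Asgs (S1 @ S2) \<theta>))))"
    using asg_mono[OF Cons.IH] Cons.prems by simp
  have 2: "derivable (Imp (Asg (fst q) (snd q) (Asg (fst p) (snd p) (Asgs (S1 @ S2) \<theta>)))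
                           (Asg (fst p) (snd p) (Asg (fst q) (snd q) (Asgs (S1 @ S2) \<theta>))))"
    by (rule ax_comm) (use Cons.prems in auto)
  show ?case using imp_trans[OF 1 2] by simp
qed

lemma perm: "distinct (map fst S) \<Longrightarrow> distinct (map fst S') \<Longrightarrow> set S = set S' \<Longrightarrow> wff \<theta> \<Longrightarrow>
  derivable (Imp (Asgs S \<theta>) (Asgs S' \<theta>))"
proof (induction S' arbitrary: S)
  case Nil then show ?case by (simp add: imp_refl)
next
  case (Cons p S'' S)
  have "p \<in> set S" using Cons.prems by auto
  then obtain S1 S2 where S: "S = S1 @ p # S2" by (meson split_list)
  have dS: "distinct S" using Cons.prems(1) distinct_map by blast
  have dS': "distinct (p # S'')" using Cons.prems(2) distinct_map by blast
  have nf: "fst p \<notin> fst ` set S1" using Cons.prems(1) S by auto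
  have m: "derivable (Imp (Asgs S \<theta>) (Asgs (p # S1 @ S2) \<theta>))" using move[OF nf Cons.prems(4)] S by simp
  have se: "set (S1 @ S2) = set S''" using Cons.prems(3) dS dS' S by auto
  have "derivable (Imp (Asgs (S1 @ S2) \<theta>) (Asgs S'' \<theta>))"
    by (rule Cons.IH) (use Cons.prems S se in auto)
  then have "derivable (Imp (Asgs (p # S1 @ S2) \<theta>) (Asgs (p # S'') \<theta>))"
    by (simp add: asg_mono)
  then show ?case using imp_trans[OF m] by blast
qed

lemma perm_Ew: "distinct (map fst S) \<Longrightarrow> distinct (map fst S') \<Longrightarrow> set S = set S' \<Longrightarrow> finite W \<Longrightarrow> sentence \<beta> \<Longrightarrow>
  derivable (Imp (Ew W S \<beta>) (Ew W S' \<beta>))"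
  unfolding Ew_def using perm[of S S' "K (W \<union> fst ` set S) \<beta>"] by (simp add: sentence_def)

lemma subst_Asgs: "x \<notin> fst ` set S \<Longrightarrow> subst y x (Asgs S \<phi>) = Asgs S (subst y x \<phi>)"
  by (induction S) auto

lemma admissible_Asgs: "x \<notin> fst ` set S \<Longrightarrow> y \<notin> fst ` set S \<Longrightarrow> admissible y x (Asgs S (K X \<beta>))"
  by (induction S) auto

lemma rename: "v \<notin> fst ` set S \<Longrightarrow> w \<notin> fst ` set S \<Longrightarrow> w \<notin> W \<Longrightarrow> v \<notin> W \<Longrightarrow> finite W \<Longrightarrow> sentence \<beta> \<Longrightarrow>
  derivable (Imp (Ew W ((v,a)#S) \<beta>) (Ew W ((w,a)#S) \<beta>))"
proof -
  assume h: "v \<notin> fst ` set S" "w \<notin> fst ` set S" "w \<notin> W" "v \<notin> W" "finite W" "sentence \<beta>"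
  define \<phi> where "\<phi> = Asgs S (K (W \<union> insert v (fst ` set S)) \<beta>)"
  have e1: "Ew W ((v,a)#S) \<beta> = Asg v a \<phi>" by (simp add: Ew_def \<phi>_def)
  have sub: "subst w v \<phi> = Asgs S (K (W \<union> insert w (fst ` set S)) \<beta>)"
    using h by (simp add: \<phi>_def subst_Asgs)
  have e2: "Ew W ((w,a)#S) \<beta> = Asg w a (subst w v \<phi>)" by (simp add: Ew_def sub)
  have ad: "admissible w v \<phi>" unfolding \<phi>_def using h by (intro admissible_Asgs)
  have s: "derivable (Asg w a (Imp (Asg v a \<phi>) (subst w v \<phi>)))"
    by (rule ax_sub[OF ad]) (simp only: sub, use h in \<open>simp add: \<phi>_def sentence_def\<close>)
  have vac: "derivable (Imp (Asg v a \<phi>) (Asg w a (Asg v a \<phi>)))"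
    by (rule ax_vac) (use h in \<open>auto simp: \<phi>_def sentence_def\<close>)
  show ?thesis using imp_trans[OF vac asg_K[OF s]] e1 e2 by simp
qed

lemma ext_Ew: "fst ` set R \<inter> (W \<union> fst ` set S) = {} \<Longrightarrow> finite W \<Longrightarrow> sentence \<beta> \<Longrightarrow>
  derivable (Imp (Ew W S \<beta>) (Ew W (S @ R) \<beta>))"
proof -
  assume h: "fst ` set R \<inter> (W \<union> fst ` set S) = {}" "finite W" "sentence \<beta>"
  define k where "k = K (W \<union> fst ` set S) \<beta>"
  define k' where "k' = K (W \<union> fst ` set (S @ R)) \<beta>"
  have 1: "derivable (Imp k (Asgs R k))" by (rule asgs_vac) (use h in \<open>auto simp: k_def sentence_def\<close>)
  have 2: "derivable (Imp k k')" unfolding k_def k'_def by (rule ax_mono) (use h in \<open>auto simp: sentence_def\<close>)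
  have 3: "derivable (Imp k (Asgs R k'))" using imp_trans[OF 1 asgs_mono[OF 2]] .
  show ?thesis using asgs_mono[OF 3, of S] by (simp add: Ew_def k_def k'_def)
qed



lemma step:
  assumes dS: "distinct (map fst S)" "distinct (map snd S)"
    and va: "(v,a) \<in> set S"
    and wW: "w \<notin> W" and WS: "W \<inter> fst ` set S = {}" and u: "u \<notin> W" "u \<notin> fst ` set S"
    and fW: "finite W" and sb: "sentence \<beta>"
  shows "\<exists>S1 u'. derivable (Imp (Ew W S \<beta>) (Ew W ((w,a)#S1) \<beta>)) \<and> distinct (map fst ((w,a)#S1))
     \<and> distinct (map snd ((w,a)#S1)) \<and> snd ` set S1 = snd ` set S - {a} \<and> W \<inter> fst ` set S1 = {}
     \<and> u' \<notin> W \<and> u' \<notin> fst ` set ((w,a)#S1)"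
proof -
  have if1: "inj_on fst (set S)" and if2: "inj_on snd (set S)" using dS distinct_map by auto
  have fst_eq: "\<And>p q. p \<in> set S \<Longrightarrow> q \<in> set S \<Longrightarrow> fst p = fst q \<Longrightarrow> p = q" using if1 by (simp add: inj_on_eq_iff)
  have snd_eq: "\<And>p q. p \<in> set S \<Longrightarrow> q \<in> set S \<Longrightarrow> snd p = snd q \<Longrightarrow> p = q" using if2 by (simp add: inj_on_eq_iff)
  define S1 where "S1 = filter (\<lambda>p. p \<noteq> (v,a)) S"
  have S1s: "set S1 = set S - {(v,a)}" by (auto simp: S1_def)
  have dS1: "distinct (map fst S1)" "distinct (map snd S1)" using dS by (auto simp: S1_def distinct_map_filter)
  have vS1: "v \<notin> fst ` set S1"
  proof
    assume "v \<in> fst ` set S1"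
    then obtain c where "(v,c) \<in> set S1" by force
    then show False using fst_eq[of "(v,c)" "(v,a)"] va S1s by auto
  qed
  have aS1: "a \<notin> snd ` set S1"
  proof
    assume "a \<in> snd ` set S1"
    then obtain y where "(y,a) \<in> set S1" by force
    then show False using snd_eq[of "(y,a)" "(v,a)"] va S1s by auto
  qed
  have sndS1: "snd ` set S1 = snd ` set S - {a}"
  proof
    show "snd ` set S1 \<subseteq> snd ` set S - {a}" using aS1 S1s by auto
    show "snd ` set S - {a} \<subseteq> snd ` set S1" using S1s by force
  qed
  have p1: "derivable (Imp (Ew W S \<beta>) (Ew W ((v,a)#S1) \<beta>))"
    by (rule perm_Ew) (use dS dS1 vS1 va S1s fW sb in auto)
  have vW: "v \<notin> W" using WS va by force
  show ?thesis
  proof (cases "w = v")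
    case True
    have uv: "u \<noteq> v" using u(2) va by force
    have WS1: "W \<inter> fst ` set S1 = {}" using WS S1s by auto
    show ?thesis
      apply (rule exI[of _ S1], rule exI[of _ u])
      apply (intro conjI)
      using p1 True apply simp
      using dS1 vS1 True apply simp
      using dS1 aS1 apply simp
      using sndS1 apply simp
      using WS1 apply simp
      using u apply simp
      using u uv True S1s by simp
  next
    case wv: False
    show ?thesis
    proof (cases "w \<in> fst ` set S")
      case False
      have wS1: "w \<notin> fst ` set S1" using False S1s by auto
      have r: "derivable (Imp (Ew W ((v,a)#S1) \<beta>) (Ew W ((w,a)#S1) \<beta>))"
        by (rule rename) (use vS1 wS1 wW vW fW sb in auto)
      have WS1: "W \<inter> fst ` set S1 = {}" using WS S1s by auto
      show ?thesis
        apply (rule exI[of _ S1], rule exI[of _ v])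
        apply (intro conjI)
        using imp_trans[OF p1 r] apply simp
        using dS1 wS1 apply simp
        using dS1 aS1 apply simp
        using sndS1 apply simp
        using WS1 apply simp
        using vW apply simp
        using wv vS1 by simp
    next
      case True
      then obtain b where wb: "(w,b) \<in> set S" by force
      have ba: "b \<noteq> a" using snd_eq[of "(w,b)" "(v,a)"] wb va wv by auto
      define S2 where "S2 = filter (\<lambda>p. p \<noteq> (v,a) \<and> p \<noteq> (w,b)) S"
      have S2s: "set S2 = set S - {(v,a), (w,b)}" by (auto simp: S2_def)
      have dS2: "distinct (map fst S2)" "distinct (map snd S2)" using dS by (auto simp: S2_def distinct_map_filter)
      have vS2: "v \<notin> fst ` set S2"
      proof
        assume "v \<in> fst ` set S2"
        then obtain c where "(v,c) \<in> set S2" by force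
        then show False using fst_eq[of "(v,c)" "(v,a)"] va S2s by auto
      qed
      have wS2: "w \<notin> fst ` set S2"
      proof
        assume "w \<in> fst ` set S2"
        then obtain c where "(w,c) \<in> set S2" by force
        then show False using fst_eq[of "(w,c)" "(w,b)"] wb S2s by auto
      qed
      have aS2: "a \<notin> snd ` set S2"
      proof
        assume "a \<in> snd ` set S2"
        then obtain y where "(y,a) \<in> set S2" by force
        then show False using snd_eq[of "(y,a)" "(v,a)"] va S2s by auto
      qed
      have bS2: "b \<notin> snd ` set S2"
      proof
        assume "b \<in> snd ` set S2"
        then obtain y where "(y,b) \<in> set S2" by force
        then show False using snd_eq[of "(y,b)" "(w,b)"] wb S2s by auto
      qed
      have uS2: "u \<notin> fst ` set S2" using u S2s by auto
      have uv1: "u \<noteq> v" using u(2) va by force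
      have uv2: "u \<noteq> w" using u(2) wb by force
      note uv = uv1 uv2
      have q1: "derivable (Imp (Ew W S \<beta>) (Ew W ((w,b)#(v,a)#S2) \<beta>))"
      proof (rule perm_Ew[OF dS(1) _ _ fW sb])
        show "distinct (map fst ((w,b)#(v,a)#S2))" using dS2 vS2 wS2 wv by simp
        show "set S = set ((w,b)#(v,a)#S2)" using S2s va wb by auto
      qed
      have q2: "derivable (Imp (Ew W ((w,b)#(v,a)#S2) \<beta>) (Ew W ((u,b)#(v,a)#S2) \<beta>))"
        by (rule rename[OF _ _ u(1) wW fW sb]) (use wS2 uS2 uv wv in simp)+
      have q3: "derivable (Imp (Ew W ((u,b)#(v,a)#S2) \<beta>) (Ew W ((v,a)#(u,b)#S2) \<beta>))"
      proof (rule perm_Ew[OF _ _ _ fW sb])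
        show "distinct (map fst ((u,b)#(v,a)#S2))" using dS2 vS2 uS2 uv by simp
        show "distinct (map fst ((v,a)#(u,b)#S2))" using dS2 vS2 uS2 uv by simp
        show "set ((u,b)#(v,a)#S2) = set ((v,a)#(u,b)#S2)" by auto
      qed
      have q4: "derivable (Imp (Ew W ((v,a)#(u,b)#S2) \<beta>) (Ew W ((w,a)#(u,b)#S2) \<beta>))"
        by (rule rename[OF _ _ wW vW fW sb]) (use vS2 wS2 uv in simp)+
      have sndS: "snd ` set ((u,b)#S2) = snd ` set S - {a}"
      proof
        show "snd ` set ((u, b) # S2) \<subseteq> snd ` set S - {a}"
        proof
          fix c assume "c \<in> snd ` set ((u, b) # S2)"
          then have "c = b \<or> c \<in> snd ` set S2" by simp
          then show "c \<in> snd ` set S - {a}"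
          proof
            assume "c = b" then show ?thesis using ba wb by force
          next
            assume c: "c \<in> snd ` set S2"
            then have "c \<noteq> a" using aS2 by blast
            moreover have "c \<in> snd ` set S" using c S2s by blast
            ultimately show ?thesis by simp
          qed
        qed
        show "snd ` set S - {a} \<subseteq> snd ` set ((u, b) # S2)"
        proof
          fix c assume c: "c \<in> snd ` set S - {a}"
          then obtain y where y: "(y,c) \<in> set S" "c \<noteq> a" by force
          show "c \<in> snd ` set ((u, b) # S2)"
          proof (cases "c = b")
            case True then show ?thesis by simp
          next
            case False
            then have "(y,c) \<in> set S2" using y S2s by auto
            then show ?thesis by force
          qed
        qed
      qed
      have WS2: "W \<inter> fst ` set ((u,b)#S2) = {}" using WS S2s u by auto
      show ?thesis
        apply (rule exI[of _ "(u,b)#S2"], rule exI[of _ v])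
        apply (intro conjI)
        using imp_trans[OF imp_trans[OF imp_trans[OF q1 q2] q3] q4] apply simp
        using dS2 wS2 uS2 uv apply simp
        using dS2 aS2 bS2 ba apply simp
        using sndS apply simp
        using WS2 apply simp
        using vW apply simp
        using wv vS2 uv by simp
    qed
  qed
qed

lemma L1: "distinct (map fst S) \<Longrightarrow> distinct (map snd S) \<Longrightarrow> distinct (map fst T) \<Longrightarrow> distinct (map snd T) \<Longrightarrow>
  snd ` set S = snd ` set T \<Longrightarrow> W \<inter> fst ` set S = {} \<Longrightarrow> W \<inter> fst ` set T = {} \<Longrightarrow>
  u \<notin> W \<Longrightarrow> u \<notin> fst ` set S \<Longrightarrow> finite W \<Longrightarrow> sentence \<beta> \<Longrightarrow>
  derivable (Imp (Ew W S \<beta>) (Ew W T \<beta>))"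
proof (induction T arbitrary: S W u)
  case Nil
  then have "S = []" by auto
  then show ?case using Nil by (simp add: imp_refl)
next
  case (Cons p T')
  obtain w a where p: "p = (w,a)" by force
  have "a \<in> snd ` set S" using Cons.prems(5) p by auto
  then obtain v where va: "(v,a) \<in> set S" by force
  have wW: "w \<notin> W" using Cons.prems(7) p by auto
  obtain S1 u' where st: "derivable (Imp (Ew W S \<beta>) (Ew W ((w,a)#S1) \<beta>))" "distinct (map fst ((w,a)#S1))"
     "distinct (map snd ((w,a)#S1))" "snd ` set S1 = snd ` set S - {a}" "W \<inter> fst ` set S1 = {}"
     "u' \<notin> W" "u' \<notin> fst ` set ((w,a)#S1)"
    using step[OF Cons.prems(1,2) va wW Cons.prems(6,8,9,10,11)] by blast
  have "derivable (Imp (Ew (insert w W) S1 \<beta>) (Ew (insert w W) T' \<beta>))"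
  proof (rule Cons.IH)
    show "distinct (map fst S1)" "distinct (map snd S1)" using st by auto
    show "distinct (map fst T')" "distinct (map snd T')" using Cons.prems p by auto
    show "snd ` set S1 = snd ` set T'" using st(4) Cons.prems(4,5) p by auto
    show "insert w W \<inter> fst ` set S1 = {}" using st by auto
    show "insert w W \<inter> fst ` set T' = {}" using Cons.prems(3,7) p by auto
    show "u' \<notin> insert w W" "u' \<notin> fst ` set S1" using st by auto
    show "finite (insert w W)" using Cons.prems by auto
    show "sentence \<beta>" using Cons.prems by auto
  qed
  then have "derivable (Imp (Ew W ((w,a)#S1) \<beta>) (Ew W ((w,a)#T') \<beta>))"
    by (simp add: Ew_Cons asg_mono)
  then show ?case using imp_trans[OF st(1)] p by simp
qed

lemma rename_main:
  fixes ch :: "'a::finite set \<Rightarrow> ('v \<times> 'a) list"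
  assumes vc: "valid_choice ch" and BC: "B \<subseteq> C" and sb: "sentence \<beta>"
  shows "derivable (Imp (Asgs (ch B) (Kvec (ch B) \<beta>)) (Asgs (ch C) (Kvec (ch C) \<beta>)))"
proof -
  have E: "\<And>S. Asgs S (Kvec S \<beta>) = Ew {} S \<beta>" by (simp add: Ew_def)
  show ?thesis
  proof (cases "B = C")
    case True then show ?thesis using sb by (simp add: imp_refl sentence_def)
  next
    case False
    define S where "S = ch B"
    define T where "T = ch C"
    have dS: "distinct (map fst S)" "distinct (map snd S)" "set (map snd S) = B"
      using vc by (auto simp: valid_choice_def S_def)
    have dT: "distinct (map fst T)" "distinct (map snd T)" "set (map snd T) = C"
      using vc by (auto simp: valid_choice_def T_def)
    have cS: "card (fst ` set S) = card B"
      using dS by (metis distinct_card length_map set_map)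
    have cT: "card (fst ` set T) = card C"
      using dT by (metis distinct_card length_map set_map)
    have "card B < card C" using BC False by (simp add: psubset_card_mono)
    then have "\<not> fst ` set T \<subseteq> fst ` set S" using cS cT
      by (metis card_mono finite_imageI finite_set leD)
    then obtain u where u: "u \<in> fst ` set T" "u \<notin> fst ` set S" by blast
    define TA where "TA = filter (\<lambda>p. snd p \<in> B) T"
    define R where "R = filter (\<lambda>p. snd p \<notin> B) T"
    have if1: "inj_on fst (set T)" using dT distinct_map by auto
    have disj: "fst ` set R \<inter> fst ` set TA = {}"
    proof -
      { fix p q assume "p \<in> set R" "q \<in> set TA" "fst p = fst q"
        then have "p = q" using if1 by (auto simp: R_def TA_def inj_on_def)
        then have False using \<open>p \<in> set R\<close> \<open>q \<in> set TA\<close> by (auto simp: R_def TA_def) }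
      then show ?thesis by blast
    qed
    have sTA: "snd ` set TA = B"
    proof
      show "snd ` set TA \<subseteq> B" by (auto simp: TA_def)
      show "B \<subseteq> snd ` set TA"
      proof
        fix c assume "c \<in> B"
        then have "c \<in> snd ` set T" using BC dT(3) by auto
        then obtain y where "(y,c) \<in> set T" by force
        then have "(y,c) \<in> set TA" using \<open>c \<in> B\<close> by (simp add: TA_def)
        then show "c \<in> snd ` set TA" by force
      qed
    qed
    have l1: "derivable (Imp (Ew {} S \<beta>) (Ew {} TA \<beta>))"
      by (rule L1[where u=u]) (use dS dT u sTA sb in \<open>auto simp: TA_def distinct_map_filter\<close>)
    have l2: "derivable (Imp (Ew {} TA \<beta>) (Ew {} (TA @ R) \<beta>))"
      by (rule ext_Ew) (use disj sb in auto)
    have l3: "derivable (Imp (Ew {} (TA @ R) \<beta>) (Ew {} T \<beta>))"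
      by (rule perm_Ew) (use dT disj sb in \<open>auto simp: TA_def R_def distinct_map_filter\<close>)
    show ?thesis using imp_trans[OF imp_trans[OF l1 l2] l3] unfolding E S_def T_def .
  qed
qed



lemma peval_Bang: "peval v (Bang x \<chi> A) =
   ((\<forall>a\<in>A. \<not> v (Asg x a (Neg \<chi>))) \<and> (\<forall>b\<in>UNIV - A. v (Asg x b (Neg \<chi>))))"
  by (simp add: Bang_def Dia_def)

lemma wff_Bang: "wff \<chi> \<Longrightarrow> wff (Bang x \<chi> A)" by (simp add: Bang_def)
lemma FV_Bang: "FV \<chi> \<subseteq> {x} \<Longrightarrow> FV (Bang x \<chi> A) = {}" by (auto simp: Bang_def)

lemma kphi_sent: "wff \<chi> \<Longrightarrow> FV \<chi> \<subseteq> {x} \<Longrightarrow> sentence \<beta> \<Longrightarrow>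
   wff (Kphi ch x \<chi> \<beta>) \<and> FV (Kphi ch x \<chi> \<beta>) = {}"
  by (auto simp: Kphi_def wff_Bang FV_Bang sentence_def)

lemma peval_Kphi: "peval v (Kphi ch x \<chi> \<beta>) =
   (\<forall>A. peval v (Bang x \<chi> A) \<longrightarrow> peval v (Asgs (ch A) (K (fst ` set (ch A)) \<beta>)))"
  by (simp add: Kphi_def)

lemma per_B:
  fixes ch :: "'a::finite set \<Rightarrow> ('v \<times> 'a) list"
  assumes vc: "valid_choice ch" and c: "chi_form x \<chi>" and sb: "sentence \<beta>"
  shows "derivable (Imp (Kphi ch x \<chi> \<beta>) (Imp (Bang x \<chi> B)
           (Asgs (ch B) (K (fst ` set (ch B)) (Kphi ch x \<chi> \<beta>)))))"
proof -
  have w: "wff \<chi>" "FV \<chi> \<subseteq> {x}" using chi_wff[OF c] by auto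
  define KP where "KP = Kphi ch x \<chi> \<beta>"
  have sKP: "wff KP" "FV KP = {}" using kphi_sent[OF w sb] by (auto simp: KP_def)
  define S where "S = ch B"
  define V where "V = fst ` set S"
  have fV: "finite V" by (simp add: V_def)
  have dS: "distinct (map fst S)" "set (map snd S) = B" using vc by (auto simp: valid_choice_def S_def)
  define D where "D = Asgs S (K V \<beta>)"
  have sD: "wff D" "FV D = {}" using sb by (auto simp: D_def V_def sentence_def)
  define PB where "PB = ConjSet (\<lambda>a. Dia x a \<chi>) B"
  have sPB: "wff PB" "FV PB = {}" using w by (auto simp: PB_def)
  have i: "derivable (Imp D (Asgs S (K V D)))"
    using asgs_K[OF PI[OF sb, of S]] by (simp add: D_def V_def)
  obtain l where l: "set l = B" using finite_list[of B] by auto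
  have know: "\<forall>a\<in>B. derivable (Imp (Dia x a \<chi>) (Asgs S (K V (Dia x a \<chi>))))"
  proof
    fix a assume "a \<in> B"
    then obtain y where "(y,a) \<in> set S" using dS(2) by force
    then show "derivable (Imp (Dia x a \<chi>) (Asgs S (K V (Dia x a \<chi>))))"
      unfolding V_def by (rule know_at[OF c dS(1)])
  qed
  have fvd: "\<And>a. FV (Dia x a \<chi>) = {}" using w(2) by auto
  have t2: "derivable (Imps (map (\<lambda>a. Dia x a \<chi>) l) PB)"
  proof (rule taut_imps)
    show "\<forall>v. (\<forall>\<gamma>\<in>set (map (\<lambda>a. Dia x a \<chi>) l). peval v \<gamma>) \<longrightarrow> peval v PB"
      by (simp add: PB_def l del: peval.simps)
    show "wff (Imps (map (\<lambda>a. Dia x a \<chi>) l) PB)" using w(1) sPB by simp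
  qed
  have ii0: "derivable (Imps (map (\<lambda>\<gamma>. Asgs S (K V \<gamma>)) (map (\<lambda>a. Dia x a \<chi>) l)) (Asgs S (K V PB)))"
    by (rule AK_monoL[OF t2 _ fV]) (use w(2) sPB in simp)
  have ii: "derivable (Imp PB (Asgs S (K V PB)))"
  proof (rule taut_rule[of "Imps (map (\<lambda>\<gamma>. Asgs S (K V \<gamma>)) (map (\<lambda>a. Dia x a \<chi>) l)) (Asgs S (K V PB))
        # map (\<lambda>a. Imp (Dia x a \<chi>) (Asgs S (K V (Dia x a \<chi>)))) l"])
    show "\<forall>\<gamma>\<in>set (Imps (map (\<lambda>\<gamma>. Asgs S (K V \<gamma>)) (map (\<lambda>a. Dia x a \<chi>) l)) (Asgs S (K V PB))
        # map (\<lambda>a. Imp (Dia x a \<chi>) (Asgs S (K V (Dia x a \<chi>)))) l). derivable \<gamma>"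
      using ii0 know l by auto
    show "wff (Imp PB (Asgs S (K V PB)))" using sPB fV by simp
    show "\<forall>v. (\<forall>\<gamma>\<in>set (Imps (map (\<lambda>\<gamma>. Asgs S (K V \<gamma>)) (map (\<lambda>a. Dia x a \<chi>) l)) (Asgs S (K V PB))
        # map (\<lambda>a. Imp (Dia x a \<chi>) (Asgs S (K V (Dia x a \<chi>)))) l). peval v \<gamma>) \<longrightarrow>
        peval v (Imp PB (Asgs S (K V PB)))"
      using l by (auto simp: PB_def simp del: peval.simps)
  qed
  obtain lc where lc: "set lc = {C. B \<subseteq> C}" using finite_list[of "{C. B \<subseteq> C}"] by auto
  have ren: "\<forall>C\<in>{C. B \<subseteq> C}. derivable (Imp D (Asgs (ch C) (K (fst ` set (ch C)) \<beta>)))"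
    using rename_main[OF vc _ sb, of B] by (simp add: D_def V_def S_def)
  have iii: "derivable (Imps [D, PB] KP)"
  proof (rule taut_rule[of "map (\<lambda>C. Imp D (Asgs (ch C) (K (fst ` set (ch C)) \<beta>))) lc"])
    show "\<forall>\<gamma>\<in>set (map (\<lambda>C. Imp D (Asgs (ch C) (K (fst ` set (ch C)) \<beta>))) lc). derivable \<gamma>"
      using ren lc by auto
    show "wff (Imps [D, PB] KP)" using sD sPB sKP by simp
    show "\<forall>v. (\<forall>\<gamma>\<in>set (map (\<lambda>C. Imp D (Asgs (ch C) (K (fst ` set (ch C)) \<beta>))) lc). peval v \<gamma>) \<longrightarrow>
        peval v (Imps [D, PB] KP)"
    proof (intro allI impI)
      fix v assume prem: "\<forall>\<gamma>\<in>set (map (\<lambda>C. Imp D (Asgs (ch C) (K (fst ` set (ch C)) \<beta>))) lc). peval v \<gamma>"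
      have prem': "\<And>C. B \<subseteq> C \<Longrightarrow> peval v D \<Longrightarrow> peval v (Asgs (ch C) (K (fst ` set (ch C)) \<beta>))"
        using prem lc by auto
      show "peval v (Imps [D, PB] KP)"
      proof (simp only: peval_Imps list.set ball_simps insert_iff empty_iff, intro impI)
        assume h: "peval v D \<and> peval v PB \<and> True"
        have pb: "\<forall>a\<in>B. \<not> v (Asg x a (Neg \<chi>))" using h by (simp add: PB_def Dia_def)
        show "peval v KP"
          unfolding KP_def peval_Kphi
        proof (intro allI impI)
          fix A assume "peval v (Bang x \<chi> A)"
          then have "\<forall>b\<in>UNIV - A. v (Asg x b (Neg \<chi>))" by (simp add: peval_Bang)
          then have "B \<subseteq> A" using pb by blast
          then show "peval v (Asgs (ch A) (K (fst ` set (ch A)) \<beta>))" using prem' h by blast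
        qed
      qed
    qed
  qed
  have iv: "derivable (Imps [Asgs S (K V D), Asgs S (K V PB)] (Asgs S (K V KP)))"
    using AK_monoL[OF iii _ fV, of S] sD sPB sKP by simp
  have EB: "D = Asgs (ch B) (K (fst ` set (ch B)) \<beta>)" by (simp add: D_def V_def S_def)
  show ?thesis
  proof (rule taut_rule[of "[Imp D (Asgs S (K V D)), Imp PB (Asgs S (K V PB)), Imps [Asgs S (K V D), Asgs S (K V PB)] (Asgs S (K V KP))]"])
    show "\<forall>\<gamma>\<in>set [Imp D (Asgs S (K V D)), Imp PB (Asgs S (K V PB)), Imps [Asgs S (K V D), Asgs S (K V PB)] (Asgs S (K V KP))]. derivable \<gamma>"
      using i ii iv by simp
    show "wff (Imp (Kphi ch x \<chi> \<beta>) (Imp (Bang x \<chi> B) (Asgs (ch B) (K (fst ` set (ch B)) (Kphi ch x \<chi> \<beta>)))))"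
      using sKP w by (simp add: KP_def wff_Bang)
    show "\<forall>v. (\<forall>\<gamma>\<in>set [Imp D (Asgs S (K V D)), Imp PB (Asgs S (K V PB)), Imps [Asgs S (K V D), Asgs S (K V PB)] (Asgs S (K V KP))]. peval v \<gamma>) \<longrightarrow>
       peval v (Imp (Kphi ch x \<chi> \<beta>) (Imp (Bang x \<chi> B) (Asgs (ch B) (K (fst ` set (ch B)) (Kphi ch x \<chi> \<beta>)))))"
    proof (intro allI impI)
      fix v assume prem: "\<forall>\<gamma>\<in>set [Imp D (Asgs S (K V D)), Imp PB (Asgs S (K V PB)), Imps [Asgs S (K V D), Asgs S (K V PB)] (Asgs S (K V KP))]. peval v \<gamma>"
      have p1: "peval v D \<Longrightarrow> peval v (Asgs S (K V D))" and p2: "peval v PB \<Longrightarrow> peval v (Asgs S (K V PB))"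
        and p3: "peval v (Asgs S (K V D)) \<Longrightarrow> peval v (Asgs S (K V PB)) \<Longrightarrow> peval v (Asgs S (K V KP))"
        using prem by (simp_all del: peval.simps add: peval_Imp)
      show "peval v (Imp (Kphi ch x \<chi> \<beta>) (Imp (Bang x \<chi> B) (Asgs (ch B) (K (fst ` set (ch B)) (Kphi ch x \<chi> \<beta>)))))"
        unfolding peval_Imp
      proof (intro impI)
        assume k: "peval v (Kphi ch x \<chi> \<beta>)" and bb: "peval v (Bang x \<chi> B)"
        have "peval v D" using k bb unfolding peval_Kphi EB by blast
        moreover have "peval v PB" using bb by (simp add: Bang_def PB_def)
        ultimately have "peval v (Asgs S (K V KP))" using p1 p2 p3 by blast
        then show "peval v (Asgs (ch B) (K (fst ` set (ch B)) (Kphi ch x \<chi> \<beta>)))"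
          by (simp add: S_def V_def KP_def)
      qed
    qed
  qed
qed

theorem proposition7:
  fixes x :: "'v::countable"
    and \<chi> \<beta> :: "('p::countable, 'v, 'a::finite) fm"
    and ch :: "'a set \<Rightarrow> ('v \<times> 'a) list"
  assumes "valid_choice ch"
    and "chi_form x \<chi>"
    and "sentence \<beta>"
  shows "derivable (Imp (Kphi ch x \<chi> \<beta>) (Kphi ch x \<chi> (Kphi ch x \<chi> \<beta>)))"
proof -
  have w: "wff \<chi>" "FV \<chi> \<subseteq> {x}" using chi_wff[OF assms(2)] by auto
  have sKP: "wff (Kphi ch x \<chi> \<beta>)" "FV (Kphi ch x \<chi> \<beta>) = {}" using kphi_sent[OF w assms(3)] by auto
  obtain lb :: "'a set list" where lb: "set lb = UNIV" using finite_list[of "UNIV :: 'a set set"] by auto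
  let ?G = "map (\<lambda>B. Imp (Kphi ch x \<chi> \<beta>) (Imp (Bang x \<chi> B)
           (Asgs (ch B) (K (fst ` set (ch B)) (Kphi ch x \<chi> \<beta>))))) lb"
  show ?thesis
  proof (rule taut_rule[of ?G])
    show "\<forall>\<gamma>\<in>set ?G. derivable \<gamma>" using per_B[OF assms] by auto
    show "wff (Imp (Kphi ch x \<chi> \<beta>) (Kphi ch x \<chi> (Kphi ch x \<chi> \<beta>)))"
      using kphi_sent[OF w, of "Kphi ch x \<chi> \<beta>"] sKP by (simp add: sentence_def)
    show "\<forall>v. (\<forall>\<gamma>\<in>set ?G. peval v \<gamma>) \<longrightarrow> peval v (Imp (Kphi ch x \<chi> \<beta>) (Kphi ch x \<chi> (Kphi ch x \<chi> \<beta>)))"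
    proof (intro allI impI)
      fix v assume prem: "\<forall>\<gamma>\<in>set ?G. peval v \<gamma>"
      have pB: "\<And>B. peval v (Kphi ch x \<chi> \<beta>) \<Longrightarrow> peval v (Bang x \<chi> B) \<Longrightarrow>
          peval v (Asgs (ch B) (K (fst ` set (ch B)) (Kphi ch x \<chi> \<beta>)))"
      proof -
        fix B assume "peval v (Kphi ch x \<chi> \<beta>)" "peval v (Bang x \<chi> B)"
        moreover have "peval v (Imp (Kphi ch x \<chi> \<beta>) (Imp (Bang x \<chi> B)
           (Asgs (ch B) (K (fst ` set (ch B)) (Kphi ch x \<chi> \<beta>)))))" using prem lb by auto
        ultimately show "peval v (Asgs (ch B) (K (fst ` set (ch B)) (Kphi ch x \<chi> \<beta>)))"
          unfolding peval_Imp by blast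
      qed
      show "peval v (Imp (Kphi ch x \<chi> \<beta>) (Kphi ch x \<chi> (Kphi ch x \<chi> \<beta>)))"
        unfolding peval_Imp peval_Kphi[of v ch x \<chi> "Kphi ch x \<chi> \<beta>"] using pB by blast
    qed
  qed
qed


end
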